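(* Let $U$ take values in a finite set $\mathcal{U}$ with $|\mathcal{U}|=L\ge2$ and let $Q$ take values in a finite alphabet. Then \[K^{(L)}(U|Q)\le1-\frac{2}{L-1}P_e^{(L)}(U|Q).\]
   Context: With $P_Q$ and $P_{U|Q}$ the marginal and conditional laws: $K^{(L)}(U|Q)=\sum_q\sum_{u'\ne u}\frac{P_Q(q)}{L-1}\cdot\frac{|P_{U|Q}(u|q)-P_{U|Q}(u'|q)|}{2}$, where the inner sum ranges over ordered pairs $(u,u')\in\mathcal{U}^2$ with $u'\ne u$; and $P_e^{(L)}(U|Q)=\sum_qP_Q(q)\big(1-\max_uP_{U|Q}(u|q)\big)$. *)

theory Defs
  imports "HOL-Probability.Probability"
begin

text \<open>Joint law of (U,Q) given as a pmf on 'u \<times> 'q, with 'u, 'q finite alphabets.\<close>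

definition PQ :: "('u::finite \<times> 'q::finite) pmf \<Rightarrow> 'q \<Rightarrow> real" where
  "PQ p q = (\<Sum>u\<in>UNIV. pmf p (u, q))"

definition PUQ :: "('u::finite \<times> 'q::finite) pmf \<Rightarrow> 'u \<Rightarrow> 'q \<Rightarrow> real" where
  "PUQ p u q = pmf p (u, q) / PQ p q"

definition KL :: "('u::finite \<times> 'q::finite) pmf \<Rightarrow> real" where
  "KL p = (\<Sum>q\<in>UNIV. \<Sum>u\<in>UNIV. \<Sum>u'\<in>UNIV - {u}.
      PQ p q / (real CARD('u) - 1) * (\<bar>PUQ p u q - PUQ p u' q\<bar> / 2))"

definition PeL :: "('u::finite \<times> 'q::finite) pmf \<Rightarrow> real" where
  "PeL p = (\<Sum>q\<in>UNIV. PQ p q * (1 - Max (range (\<lambda>u. PUQ p u q))))"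

end

theory Submission
  imports Defs
begin

lemma pair_bound:
  fixes x :: "'u::finite \<Rightarrow> real"
  assumes nn: "\<And>u. x u \<ge> 0" and s1: "(\<Sum>u\<in>UNIV. x u) = 1"
    and mx: "\<And>v. x v \<le> x u0"
  shows "(\<Sum>u\<in>UNIV. \<Sum>v\<in>UNIV - {u}. \<bar>x u - x v\<bar>) \<le> 2 * (real CARD('u) - 3 + 2 * x u0)"
proof -
  have ab: "\<bar>x u - x v\<bar> = (x u + x v) - 2 * min (x u) (x v)" for u v by auto
  have rem: "(\<Sum>v\<in>UNIV - {u}. x v) = 1 - x u" for u
    using s1 by (simp add: sum_diff1)
  have card: "card (UNIV - {u::'u}) = CARD('u) - 1" for u by (simp add: card_Diff_singleton)
  have c1: "CARD('u) \<ge> 1" by (simp add: Suc_leI)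
  have A: "(\<Sum>u\<in>UNIV. \<Sum>v\<in>UNIV - {u}. x u + x v) = 2 * real CARD('u) - 2"
  proof -
    have "(\<Sum>u\<in>UNIV. \<Sum>v\<in>UNIV - {u}. x u + x v) = (\<Sum>u\<in>UNIV. (real CARD('u) - 1) * x u + (1 - x u))"
      using c1 by (simp add: sum.distrib rem card of_nat_diff)
    also have "\<dots> = (real CARD('u) - 1) * 1 + (real CARD('u) - 1)"
      by (simp add: sum.distrib sum_subtractf sum_distrib_left[symmetric] s1)
    finally show ?thesis by simp
  qed
  have g: "(\<Sum>v\<in>UNIV - {u}. min (x u) (x v)) \<ge> (if u = u0 then 1 - x u0 else x u)" for u
  proof (cases "u = u0")
    case True
    have "(\<Sum>v\<in>UNIV - {u}. min (x u) (x v)) = (\<Sum>v\<in>UNIV - {u}. x v)"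
      unfolding True by (rule sum.cong[OF refl], rule min_absorb2[OF mx])



    then show ?thesis using True rem by simp
  next
    case False
    have "(\<Sum>v\<in>{u0}. min (x u) (x v)) \<le> (\<Sum>v\<in>UNIV - {u}. min (x u) (x v))"
      using False nn by (intro sum_mono2) auto
    then show ?thesis using False mx by (simp add: min_def)
  qed
  have B: "(\<Sum>u\<in>UNIV. \<Sum>v\<in>UNIV - {u}. min (x u) (x v)) \<ge> 2 * (1 - x u0)"
  proof -
    have "(\<Sum>u\<in>UNIV. (if u = u0 then 1 - x u0 else x u)) \<le> (\<Sum>u\<in>UNIV. \<Sum>v\<in>UNIV - {u}. min (x u) (x v))"
      using g by (intro sum_mono) auto
    moreover have "(\<Sum>u\<in>UNIV. (if u = u0 then 1 - x u0 else x u)) = (1 - x u0) + (\<Sum>u\<in>UNIV - {u0}. x u)"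
      by (simp add: sum.remove[of UNIV u0])
    ultimately show ?thesis using rem[of u0] by simp
  qed
  have "(\<Sum>u\<in>UNIV. \<Sum>v\<in>UNIV - {u}. \<bar>x u - x v\<bar>)
      = (\<Sum>u\<in>UNIV. \<Sum>v\<in>UNIV - {u}. x u + x v) - 2 * (\<Sum>u\<in>UNIV. \<Sum>v\<in>UNIV - {u}. min (x u) (x v))"
    by (simp add: ab sum_subtractf sum_distrib_left)
  then show ?thesis using A B by simp
qed

theorem lemma10:
  fixes p :: "('u::finite \<times> 'q::finite) pmf"
  assumes "CARD('u) \<ge> 2"
  shows "KL p \<le> 1 - 2 / (real CARD('u) - 1) * PeL p"
proof -
  define L where "L = real CARD('u)"
  have L1: "L - 1 > 0" using assms unfolding L_def by simp
  define m where "m q = Max (range (\<lambda>u. PUQ p u q))" for q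
  have sPQ: "(\<Sum>q\<in>UNIV. PQ p q) = 1"
  proof -
    have "(\<Sum>q\<in>UNIV. PQ p q) = (\<Sum>z\<in>(UNIV::'u set) \<times> (UNIV::'q set). pmf p z)"
      unfolding PQ_def by (subst sum.swap) (simp add: sum.cartesian_product)
    also have "\<dots> = 1" by (simp add: sum_pmf_eq_1)
    finally show ?thesis .
  qed
  have KLe: "KL p = (\<Sum>q\<in>UNIV. PQ p q / (L - 1) / 2 * (\<Sum>u\<in>UNIV. \<Sum>v\<in>UNIV - {u}. \<bar>PUQ p u q - PUQ p v q\<bar>))"
    unfolding KL_def L_def by (simp add: sum_distrib_left)
  have per: "PQ p q / (L - 1) / 2 * (\<Sum>u\<in>UNIV. \<Sum>v\<in>UNIV - {u}. \<bar>PUQ p u q - PUQ p v q\<bar>)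
      \<le> PQ p q * (1 - 2 / (L - 1) * (1 - m q))" for q
  proof (cases "PQ p q = 0")
    case True then show ?thesis by simp
  next
    case False
    have PQnn: "PQ p q \<ge> 0" unfolding PQ_def by (simp add: sum_nonneg)
    with False have pos: "PQ p q > 0" by simp
    have nn: "PUQ p u q \<ge> 0" for u unfolding PUQ_def using PQnn by simp
    have s1: "(\<Sum>u\<in>UNIV. PUQ p u q) = 1"
      unfolding PUQ_def using False by (simp add: sum_divide_distrib[symmetric] PQ_def)
    obtain u0 where u0: "PUQ p u0 q = m q"
    proof -
      have "m q \<in> range (\<lambda>u. PUQ p u q)" unfolding m_def by (rule Max_in) auto
      then obtain w where "m q = PUQ p w q" by blast
      then show ?thesis by (metis that)
    qed
    have mx: "PUQ p v q \<le> PUQ p u0 q" for v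
      unfolding u0 m_def by (rule Max_ge) auto
    have b: "(\<Sum>u\<in>UNIV. \<Sum>v\<in>UNIV - {u}. \<bar>PUQ p u q - PUQ p v q\<bar>) \<le> 2 * (L - 3 + 2 * m q)"
      using pair_bound[of "\<lambda>u. PUQ p u q", OF nn s1 mx] u0 unfolding L_def by simp
    have "PQ p q / (L - 1) / 2 * (\<Sum>u\<in>UNIV. \<Sum>v\<in>UNIV - {u}. \<bar>PUQ p u q - PUQ p v q\<bar>)
        \<le> PQ p q / (L - 1) / 2 * (2 * (L - 3 + 2 * m q))"
      using b pos L1 by (intro mult_left_mono) auto
    also have "\<dots> = PQ p q * (1 - 2 / (L - 1) * (1 - m q))"
      using L1 by (simp add: field_simps)
    finally show ?thesis .
  qed
  have "KL p \<le> (\<Sum>q\<in>UNIV. PQ p q * (1 - 2 / (L - 1) * (1 - m q)))"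
    unfolding KLe by (intro sum_mono per)
  also have "\<dots> = (\<Sum>q\<in>UNIV. PQ p q) - 2 / (L - 1) * (\<Sum>q\<in>UNIV. PQ p q * (1 - m q))"
  proof -
    have "PQ p q * (1 - 2 / (L - 1) * (1 - m q)) = PQ p q - 2 / (L - 1) * (PQ p q * (1 - m q))" for q
      by (simp add: algebra_simps add_divide_distrib[symmetric])
    then show ?thesis by (simp only: sum_subtractf sum_distrib_left[symmetric])
  qed
  also have "\<dots> = 1 - 2 / (real CARD('u) - 1) * PeL p"
    unfolding sPQ PeL_def m_def L_def by simp
  finally show ?thesis .
qed

end
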